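(* Let $K$ be an algebraically closed field of characteristic zero, $m,n\ge1$, and let $G$ be a differential ideal of $K[[t_1,\ldots,t_m]]\{x_1,\ldots,x_n\}$. If $\varphi\in K[[t_1,\ldots,t_m]]^n$ is a solution of $G$ (i.e. $P(\varphi)=0$ for all $P\in G$), then $\operatorname{Supp}(\varphi)$ is a solution of $\operatorname{trop}(G)$.
   Context: Notation: $t^J=t_1^{j_1}\cdots t_m^{j_m}$, $\|J\|_\infty=\max_i j_i$, $\Theta(J)=\partial_{t_1}^{j_1}\cdots\partial_{t_m}^{j_m}$. $K[[t_1,\ldots,t_m]]\{x_1,\ldots,x_n\}$ is the polynomial ring over $K[[t_1,\ldots,t_m]]$ in the indeterminates $x_{i,J}$ ($1\le i\le n$, $J\in\mathbb{Z}_{\ge0}^m$), with derivations $\partial_{t_k}$ extended by $\partial_{t_k}x_{i,J}=x_{i,J+e_k}$; a differential ideal is an ideal stable under these derivations. For $\varphi\in K[[t]]^n$, $P(\varphi)$ is obtained by substituting $\Theta(J)\varphi_i$ for $x_{i,J}$. Every $P$ can be written $P=\sum_{M\in\Delta}\alpha_ME_M$ with $\Delta$ finite, $\alpha_M\in K[[t]]$, and differential monomials $E_M=\prod_{i,\|J\|_\infty\le r}x_{i,J}^{M_{i,J}}$. $\operatorname{Supp}(\sum a_Jt^J)=\{J:a_J\ne0\}$, applied componentwise to tuples. For $X\subseteq\mathbb{Z}_{\ge0}^m$, $\mathcal{N}(X)$ is the convex hull in $\mathbb{R}^m$ of $X+\mathbb{Z}_{\ge0}^m$, $x\in X$ is a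 vertex if $x\notin\mathcal{N}(X\setminus\{x\})$, $\operatorname{Vert}(X)$ is the set of vertices; $\operatorname{trop}(\psi)=\operatorname{Vert}(\operatorname{Supp}\psi)$ for $\psi\in K[[t]]$. Vertex sets form a semiring with $S\oplus T=\operatorname{Vert}(S\cup T)$, $S\odot T=\operatorname{Vert}(S+T)$ (Minkowski sum). $\Theta_{\operatorname{trop}}(J)T=\{(s_1-j_1,\ldots,s_m-j_m):(s_i)\in T, s_i\ge j_i\ \forall i\}$. For $S=(S_1,\dots,S_n)$ subsets of $\mathbb{Z}_{\ge0}^m$, the tropical monomial $\epsilon_M$ evaluates as $\epsilon_M(S)=\operatorname{Vert}\bigl(\sum_{i,J}M_{i,J}\Theta_{\operatorname{trop}}(J)S_i\bigr)$ (Minkowski sums, $kX$ the $k$-fold sum, $0X=\{0\}$). The tropicalization of $P=\sum_{M\in\Delta}\alpha_ME_M$ is the tropical differential polynomial $p=\operatorname{trop}(P)=\bigoplus_{M\in\Delta}a_M\odot\epsilon_M$ with $a_M=\operatorname{trop}(\alpha_M)$ (terms with $\alpha_M=0$ omitted), evaluated as $p(S)=\operatorname{Vert}\bigl(\bigcup_{M\in\Delta}(a_M+\epsilon_M(S))\bigr)$. $S$ is a solution of $p$ if for every $J\in p(S)$ there are $M_1\neq M_2$ in $\Delta$ with $J\in a_{M_1}\odot\epsilon_{M_1}(S)$ and $J\in a_{M_2}\odot\epsilon_{M_2}(S)$ (so if $p(S)=\emptyset$, $S$ is a solution). $\operatorname{trop}(G)=\{\operatorname{trop}(P):P\in G\}$,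 and $S$ is a solution of $\operatorname{trop}(G)$ if it is a solution of every element. *)

theory Defs
  imports "HOL-Analysis.Analysis" "HOL-Computational_Algebra.Polynomial"
begin

definition alg_closed_field :: "'k::field itself \<Rightarrow> bool" where
  "alg_closed_field _ \<longleftrightarrow> (\<forall>p::'k poly. 0 < degree p \<longrightarrow> (\<exists>x. poly p x = 0))"

text \<open>A multi-index J in Z_{>=0}^m is a function 'm => nat; a power series
  sum a_J t^J is its coefficient function.\<close>

type_synonym ('m, 'k) ps = "('m \<Rightarrow> nat) \<Rightarrow> 'k"

definition ps_zero :: "('m, 'k::zero) ps" where
  "ps_zero = (\<lambda>J. 0)"

definition ps_one :: "('m, 'k::{zero,one}) ps" where
  "ps_one = (\<lambda>J. if J = (\<lambda>_. 0) then 1 else 0)"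

definition ps_mult :: "('m::finite, 'k::comm_ring_1) ps \<Rightarrow> ('m, 'k) ps \<Rightarrow> ('m, 'k) ps" where
  "ps_mult f g = (\<lambda>J. \<Sum>A\<in>{A. A \<le> J}. f A * g (\<lambda>i. J i - A i))"

definition ps_pow :: "('m::finite, 'k::comm_ring_1) ps \<Rightarrow> nat \<Rightarrow> ('m, 'k) ps" where
  "ps_pow f k = (ps_mult f ^^ k) ps_one"

definition ps_prod :: "('a \<Rightarrow> ('m::finite, 'k::comm_ring_1) ps) \<Rightarrow> 'a set \<Rightarrow> ('m, 'k) ps" where
  "ps_prod f I = Finite_Set.fold (\<lambda>i acc. ps_mult (f i) acc) ps_one I"

definition ps_deriv :: "'m \<Rightarrow> ('m, 'k::comm_ring_1) ps \<Rightarrow> ('m, 'k) ps" where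
  "ps_deriv k f = (\<lambda>A. of_nat (A k + 1) * f (A(k := A k + 1)))"

definition Theta :: "('m::finite \<Rightarrow> nat) \<Rightarrow> ('m, 'k::comm_ring_1) ps \<Rightarrow> ('m, 'k) ps" where
  "Theta J f = Finite_Set.fold (\<lambda>k g. (ps_deriv k ^^ J k) g) f UNIV"

definition Supp :: "('m, 'k::zero) ps \<Rightarrow> ('m \<Rightarrow> nat) set" where
  "Supp f = {J. f J \<noteq> 0}"

text \<open>The indeterminate x_{i,J} is indexed by (i,J) :: 'n \<times> ('m => nat).
  A differential monomial E_M is given by its exponent function M (finite support),
  a differential polynomial P = sum_M alpha_M E_M by the coefficient map M => alpha_M.\<close>

type_synonym ('n, 'm) dmono = "('n \<times> ('m \<Rightarrow> nat)) \<Rightarrow> nat"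
type_synonym ('n, 'm, 'k) dpoly = "('n, 'm) dmono \<Rightarrow> ('m, 'k) ps"

definition mono_supp :: "('n, 'm) dmono \<Rightarrow> ('n \<times> ('m \<Rightarrow> nat)) set" where
  "mono_supp M = {p. M p \<noteq> 0}"

definition dsupp :: "('n, 'm, 'k::zero) dpoly \<Rightarrow> ('n, 'm) dmono set" where
  "dsupp P = {M. P M \<noteq> ps_zero}"

definition is_dpoly :: "('n, 'm, 'k::zero) dpoly \<Rightarrow> bool" where
  "is_dpoly P \<longleftrightarrow> finite (dsupp P) \<and> (\<forall>M\<in>dsupp P. finite (mono_supp M))"

definition dp_zero :: "('n, 'm, 'k::zero) dpoly" where
  "dp_zero = (\<lambda>M. ps_zero)"

definition dp_add :: "('n, 'm, 'k::comm_ring_1) dpoly \<Rightarrow> ('n, 'm, 'k) dpoly \<Rightarrow> ('n, 'm, 'k) dpoly" where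
  "dp_add P Q = (\<lambda>M J. P M J + Q M J)"

definition dp_neg :: "('n, 'm, 'k::comm_ring_1) dpoly \<Rightarrow> ('n, 'm, 'k) dpoly" where
  "dp_neg P = (\<lambda>M J. - P M J)"

definition dp_mult :: "('n, 'm::finite, 'k::comm_ring_1) dpoly \<Rightarrow> ('n, 'm, 'k) dpoly \<Rightarrow> ('n, 'm, 'k) dpoly" where
  "dp_mult P Q = (\<lambda>N J. \<Sum>M1\<in>dsupp P. \<Sum>M2\<in>dsupp Q.
      if N = (\<lambda>p. M1 p + M2 p) then ps_mult (P M1) (Q M2) J else 0)"

text \<open>The derivation d_{t_k}, extended by d_{t_k} x_{i,J} = x_{i,J+e_k}:
  d(alpha E_M) = (d alpha) E_M + sum_{(i,J), M(i,J)>0} M(i,J) alpha E_{M - e_{(i,J)} + e_{(i,J+e_k)}}\<close>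
definition mono_shift :: "'m \<Rightarrow> ('n \<times> ('m \<Rightarrow> nat)) \<Rightarrow> ('n, 'm) dmono \<Rightarrow> ('n, 'm) dmono" where
  "mono_shift k p M =
     (let M' = M(p := M p - 1); q = (fst p, (snd p)(k := snd p k + 1)) in M'(q := M' q + 1))"

definition dp_deriv :: "'m \<Rightarrow> ('n, 'm, 'k::comm_ring_1) dpoly \<Rightarrow> ('n, 'm, 'k) dpoly" where
  "dp_deriv k P = (\<lambda>N J. ps_deriv k (P N) J +
      (\<Sum>M\<in>dsupp P. \<Sum>p\<in>mono_supp M.
          if N = mono_shift k p M then of_nat (M p) * P M J else 0))"

definition differential_ideal :: "('n, 'm::finite, 'k::comm_ring_1) dpoly set \<Rightarrow> bool" where
  "differential_ideal G \<longleftrightarrow>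
     G \<subseteq> {P. is_dpoly P} \<and> dp_zero \<in> G \<and>
     (\<forall>P\<in>G. \<forall>Q\<in>G. dp_add P Q \<in> G) \<and>
     (\<forall>P\<in>G. dp_neg P \<in> G) \<and>
     (\<forall>P\<in>G. \<forall>Q. is_dpoly Q \<longrightarrow> dp_mult Q P \<in> G) \<and>
     (\<forall>P\<in>G. \<forall>k. dp_deriv k P \<in> G)"

definition mono_eval :: "('n, 'm::finite) dmono \<Rightarrow> ('n \<Rightarrow> ('m, 'k::comm_ring_1) ps) \<Rightarrow> ('m, 'k) ps" where
  "mono_eval M \<phi> = ps_prod (\<lambda>p. ps_pow (Theta (snd p) (\<phi> (fst p))) (M p)) (mono_supp M)"

definition dp_eval :: "('n, 'm::finite, 'k::comm_ring_1) dpoly \<Rightarrow> ('n \<Rightarrow> ('m, 'k) ps) \<Rightarrow> ('m, 'k) ps" where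
  "dp_eval P \<phi> = (\<lambda>J. \<Sum>M\<in>dsupp P. ps_mult (P M) (mono_eval M \<phi>) J)"

definition embed :: "('m::finite \<Rightarrow> nat) \<Rightarrow> real ^ 'm" where
  "embed J = (\<chi> i. real (J i))"

definition Newton :: "('m::finite \<Rightarrow> nat) set \<Rightarrow> (real ^ 'm) set" where
  "Newton X = convex hull {embed (\<lambda>i. x i + d i) | x d. x \<in> X}"

definition Vert :: "('m::finite \<Rightarrow> nat) set \<Rightarrow> ('m \<Rightarrow> nat) set" where
  "Vert X = {x \<in> X. embed x \<notin> Newton (X - {x})}"

definition trop_ps :: "('m::finite, 'k::zero) ps \<Rightarrow> ('m \<Rightarrow> nat) set" where
  "trop_ps f = Vert (Supp f)"

definition msum :: "('m \<Rightarrow> nat) set \<Rightarrow> ('m \<Rightarrow> nat) set \<Rightarrow> ('m \<Rightarrow> nat) set" where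
  "msum A B = {(\<lambda>i. a i + b i) | a b. a \<in> A \<and> b \<in> B}"

definition msum_fin :: "'a set \<Rightarrow> ('a \<Rightarrow> ('m \<Rightarrow> nat) set) \<Rightarrow> ('m \<Rightarrow> nat) set" where
  "msum_fin I A = {(\<lambda>i. \<Sum>p\<in>I. g p i) | g. \<forall>p\<in>I. g p \<in> A p}"

text \<open>k-fold Minkowski sum kX, with 0X = {0}\<close>
definition kfold :: "nat \<Rightarrow> ('m \<Rightarrow> nat) set \<Rightarrow> ('m \<Rightarrow> nat) set" where
  "kfold k X = msum_fin {..<k} (\<lambda>_. X)"

definition Theta_trop :: "('m \<Rightarrow> nat) \<Rightarrow> ('m \<Rightarrow> nat) set \<Rightarrow> ('m \<Rightarrow> nat) set" where
  "Theta_trop J T = {(\<lambda>i. s i - J i) | s. s \<in> T \<and> (\<forall>i. J i \<le> s i)}"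

definition trop_mono_eval :: "('n, 'm::finite) dmono \<Rightarrow> ('n \<Rightarrow> ('m \<Rightarrow> nat) set) \<Rightarrow> ('m \<Rightarrow> nat) set" where
  "trop_mono_eval M S =
     Vert (msum_fin (mono_supp M) (\<lambda>p. kfold (M p) (Theta_trop (snd p) (S (fst p)))))"

definition trop_term_eval :: "('n, 'm::finite, 'k::zero) dpoly \<Rightarrow> ('n, 'm) dmono \<Rightarrow> ('n \<Rightarrow> ('m \<Rightarrow> nat) set) \<Rightarrow> ('m \<Rightarrow> nat) set" where
  "trop_term_eval P M S = Vert (msum (trop_ps (P M)) (trop_mono_eval M S))"

definition trop_eval :: "('n, 'm::finite, 'k::zero) dpoly \<Rightarrow> ('n \<Rightarrow> ('m \<Rightarrow> nat) set) \<Rightarrow> ('m \<Rightarrow> nat) set" where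
  "trop_eval P S = Vert (\<Union>M\<in>dsupp P. msum (trop_ps (P M)) (trop_mono_eval M S))"

definition trop_solution :: "('n, 'm::finite, 'k::zero) dpoly \<Rightarrow> ('n \<Rightarrow> ('m \<Rightarrow> nat) set) \<Rightarrow> bool" where
  "trop_solution P S \<longleftrightarrow> (\<forall>J\<in>trop_eval P S. \<exists>M1\<in>dsupp P. \<exists>M2\<in>dsupp P.
      M1 \<noteq> M2 \<and> J \<in> trop_term_eval P M1 S \<and> J \<in> trop_term_eval P M2 S)"

end

theory Submission
  imports Defs
begin


definition addf :: "('m \<Rightarrow> nat) \<Rightarrow> ('m \<Rightarrow> nat) \<Rightarrow> ('m \<Rightarrow> nat)" where
  "addf a b = (\<lambda>i. a i + b i)"

lemma finite_le_fun: "finite {A::'m::finite \<Rightarrow> nat. A \<le> J}"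
proof -
  have "{A::'m \<Rightarrow> nat. A \<le> J} \<subseteq> (\<Pi>\<^sub>E i \<in> UNIV. {..J i})"
    by (auto simp: le_fun_def PiE_def extensional_def)
  moreover have "finite (\<Pi>\<^sub>E i \<in> (UNIV::'m set). {..J i})"
    by (rule finite_PiE) auto
  ultimately show ?thesis by (rule finite_subset)
qed

lemma ps_mult_comm: "ps_mult f g = ps_mult g (f::('m::finite,'k::comm_ring_1) ps)"
proof
  fix J
  show "ps_mult f g J = ps_mult g f J"
    unfolding ps_mult_def
    by (rule sum.reindex_bij_witness[where i="\<lambda>A i. J i - A i" and j="\<lambda>A i. J i - A i"])
       (auto simp: le_fun_def mult.commute)
qed

lemma ps_mult_assoc: "ps_mult (ps_mult f g) h = ps_mult f (ps_mult g (h::('m::finite,'k::comm_ring_1) ps))"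
proof
  fix J :: "'m \<Rightarrow> nat"
  have "ps_mult (ps_mult f g) h J =
     (\<Sum>A\<in>{A. A \<le> J}. \<Sum>B\<in>{B. B \<le> A}. f B * g (\<lambda>i. A i - B i) * h (\<lambda>i. J i - A i))"
    unfolding ps_mult_def by (simp add: sum_distrib_right)
  also have "\<dots> = (\<Sum>(A,B)\<in>Sigma {A. A \<le> J} (\<lambda>A. {B. B \<le> A}). f B * g (\<lambda>i. A i - B i) * h (\<lambda>i. J i - A i))"
    by (rule sum.Sigma) (auto intro: finite_le_fun)
  also have "\<dots> = (\<Sum>(B,C)\<in>Sigma {B. B \<le> J} (\<lambda>B. {C. C \<le> (\<lambda>i. J i - B i)}). f B * (g C * h (\<lambda>i. J i - B i - C i)))"
    apply (rule sum.reindex_bij_witness[where i="\<lambda>(B,C). (\<lambda>i. B i + C i, B)" and j="\<lambda>(A,B). (B, \<lambda>i. A i - B i)"])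
    apply (auto simp: le_fun_def mult.assoc)
    apply (metis order_trans)
    apply (metis diff_le_mono)
    apply (metis add.commute le_diff_conv2)
    done
  also have "\<dots> = ps_mult f (ps_mult g h) J"
    unfolding ps_mult_def
    by (subst sum.Sigma[symmetric]) (auto intro: finite_le_fun simp: sum_distrib_left)
  finally show "ps_mult (ps_mult f g) h J = ps_mult f (ps_mult g h) J" .
qed



definition wt :: "('m::finite \<Rightarrow> nat) \<Rightarrow> ('m \<Rightarrow> nat) \<Rightarrow> nat" where
  "wt v x = (\<Sum>k\<in>UNIV. v k * x k)"

definition minset :: "('m::finite \<Rightarrow> nat) \<Rightarrow> ('m \<Rightarrow> nat) set \<Rightarrow> ('m \<Rightarrow> nat) \<Rightarrow> bool" where
  "minset v X a \<longleftrightarrow> a \<in> X \<and> (\<forall>x\<in>X. x \<noteq> a \<longrightarrow> wt v a < wt v x)"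

lemma wt_add: "wt v (\<lambda>i. a i + b i) = wt v a + wt v b"
  unfolding wt_def by (simp add: algebra_simps sum.distrib)

lemma wt_zero: "wt v (\<lambda>i. 0) = 0"
  unfolding wt_def by simp

lemma wt_sum: "finite I \<Longrightarrow> wt v (\<lambda>i. \<Sum>p\<in>I. g p i) = (\<Sum>p\<in>I. wt v (g p))"
  unfolding wt_def by (simp add: sum_distrib_left) (rule sum.swap)

lemma wt_mono: "x \<le> y \<Longrightarrow> wt v x \<le> wt v y"
  unfolding wt_def by (intro sum_mono mult_le_mono2) (auto simp: le_fun_def)

lemma wt_diff: "A \<le> y \<Longrightarrow> wt v y = wt v A + wt v (\<lambda>i. y i - A i)"
proof -
  assume "A \<le> y"
  then have "y = (\<lambda>i. A i + (y i - A i))" by (auto simp: le_fun_def)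
  then show ?thesis by (metis wt_add)
qed

lemma msum_fin_empty: "msum_fin {} X = {\<lambda>i. 0}"
  unfolding msum_fin_def by auto

lemma msum_fin_insert:
  assumes "finite I" "p \<notin> I"
  shows "msum_fin (insert p I) X = msum (X p) (msum_fin I X)"
proof
  show "msum_fin (insert p I) X \<subseteq> msum (X p) (msum_fin I X)"
  proof
    fix t assume "t \<in> msum_fin (insert p I) X"
    then obtain g where g: "t = (\<lambda>i. \<Sum>q\<in>insert p I. g q i)" "\<forall>q\<in>insert p I. g q \<in> X q"
      unfolding msum_fin_def by auto
    then have "t = (\<lambda>i. g p i + (\<lambda>i. \<Sum>q\<in>I. g q i) i)" using assms by simp
    moreover have "(\<lambda>i. \<Sum>q\<in>I. g q i) \<in> msum_fin I X" using g unfolding msum_fin_def by auto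
    ultimately show "t \<in> msum (X p) (msum_fin I X)" using g unfolding msum_def
      by (intro CollectI exI[of _ "g p"] exI[of _ "\<lambda>i. \<Sum>q\<in>I. g q i"]) auto
  qed
next
  show "msum (X p) (msum_fin I X) \<subseteq> msum_fin (insert p I) X"
  proof
    fix t assume "t \<in> msum (X p) (msum_fin I X)"
    then obtain a g where ag: "t = (\<lambda>i. a i + (\<Sum>q\<in>I. g q i))" "a \<in> X p" "\<forall>q\<in>I. g q \<in> X q"
      unfolding msum_def msum_fin_def by auto
    define g' where "g' = g(p := a)"
    have "\<forall>q\<in>insert p I. g' q \<in> X q" using ag assms unfolding g'_def by auto
    moreover have "t = (\<lambda>i. \<Sum>q\<in>insert p I. g' q i)"
    proof
      fix i
      have "(\<Sum>q\<in>I. g' q i) = (\<Sum>q\<in>I. g q i)"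
        using assms unfolding g'_def by (intro sum.cong) auto
      then show "t i = (\<Sum>q\<in>insert p I. g' q i)" using assms ag unfolding g'_def by simp
    qed
    ultimately show "t \<in> msum_fin (insert p I) X" unfolding msum_fin_def by blast
  qed
qed

lemma kfold_0: "kfold 0 X = {\<lambda>i. 0}"
  unfolding kfold_def by (simp add: msum_fin_empty)

lemma kfold_Suc: "kfold (Suc k) X = msum X (kfold k X)"
  unfolding kfold_def by (simp add: lessThan_Suc msum_fin_insert)

lemma minset_msum:
  assumes "minset v A a" "minset v B b"
  shows "minset v (msum A B) (\<lambda>i. a i + b i)"
  unfolding minset_def
proof (intro conjI ballI impI)
  show "(\<lambda>i. a i + b i) \<in> msum A B" using assms unfolding minset_def msum_def by blast
next
  fix x assume x: "x \<in> msum A B" "x \<noteq> (\<lambda>i. a i + b i)"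
  then obtain a' b' where ab: "x = (\<lambda>i. a' i + b' i)" "a' \<in> A" "b' \<in> B" unfolding msum_def by blast
  with x have dis: "a' \<noteq> a \<or> b' \<noteq> b" by auto
  have "wt v a \<le> wt v a'"
    using assms ab unfolding minset_def by (cases "a' = a"; force)
  moreover have "wt v b \<le> wt v b'"
    using assms ab unfolding minset_def by (cases "b' = b"; force)
  ultimately have "wt v a + wt v b < wt v a' + wt v b'"
    using dis
  proof (elim disjE)
    assume "a' \<noteq> a"
    then have "wt v a < wt v a'" using assms(1) ab unfolding minset_def by auto
    then show ?thesis using \<open>wt v b \<le> wt v b'\<close> by simp
  next
    assume "b' \<noteq> b"
    then have "wt v b < wt v b'" using assms(2) ab unfolding minset_def by auto
    then show ?thesis using \<open>wt v a \<le> wt v a'\<close> by simp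
  qed
  then show "wt v (\<lambda>i. a i + b i) < wt v x" using ab by (simp add: wt_add)
qed

lemma minset_msum_fin:
  assumes "finite I" "\<forall>p\<in>I. minset v (X p) (m p)"
  shows "minset v (msum_fin I X) (\<lambda>i. \<Sum>p\<in>I. m p i)"
  using assms
proof (induction I rule: finite_induct)
  case empty
  then show ?case by (simp add: msum_fin_empty minset_def)
next
  case (insert p I)
  have "minset v (msum (X p) (msum_fin I X)) (\<lambda>i. m p i + (\<lambda>i. \<Sum>p\<in>I. m p i) i)"
    using insert by (intro minset_msum) auto
  then show ?case using insert by (simp add: msum_fin_insert)
qed

lemma minset_kfold:
  assumes "minset v X m"
  shows "minset v (kfold k X) (\<lambda>i. k * m i)"
proof (induction k)
  case 0
  then show ?case by (simp add: kfold_0 minset_def)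
next
  case (Suc k)
  have "minset v (msum X (kfold k X)) (\<lambda>i. m i + (\<lambda>i. k * m i) i)"
    using Suc assms by (intro minset_msum) auto
  then show ?case by (simp add: kfold_Suc)
qed

lemma msum_mono: "A \<subseteq> A' \<Longrightarrow> B \<subseteq> B' \<Longrightarrow> msum A B \<subseteq> msum A' B'"
  unfolding msum_def by blast

lemma msum_fin_mono: "\<forall>p\<in>I. X p \<subseteq> Y p \<Longrightarrow> msum_fin I X \<subseteq> msum_fin I Y"
  unfolding msum_fin_def by blast

lemma kfold_mono: "X \<subseteq> Y \<Longrightarrow> kfold k X \<subseteq> kfold k Y"
  unfolding kfold_def by (rule msum_fin_mono) auto

section \<open>series\<close>

lemma supp_mult:
  assumes "ps_mult f g y \<noteq> 0"
  shows "y \<in> msum (Supp f) (Supp g)"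
proof -
  obtain A where A: "A \<le> y" "f A * g (\<lambda>i. y i - A i) \<noteq> 0"
    using sum.not_neutral_contains_not_neutral[OF assms[unfolded ps_mult_def]] by blast
  have "y = (\<lambda>i. A i + (\<lambda>i. y i - A i) i)" using A by (auto simp: le_fun_def)
  then show ?thesis using A unfolding msum_def Supp_def by fastforce
qed

lemma minset_mult:
  fixes f g :: "('m::finite, 'k::idom) ps"
  assumes "minset v (Supp f) a" "minset v (Supp g) b"
  shows "minset v (Supp (ps_mult f g)) (\<lambda>i. a i + b i)"
    and "ps_mult f g (\<lambda>i. a i + b i) = f a * g b"
proof -
  let ?y = "\<lambda>i. a i + b i"
  have low: "wt v a \<le> wt v A" if "f A \<noteq> 0" for A
    using assms(1) that unfolding minset_def Supp_def by (cases "A = a"; force)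
  have lowb: "wt v b \<le> wt v A" if "g A \<noteq> 0" for A
    using assms(2) that unfolding minset_def Supp_def by (cases "A = b"; force)
  have key: "y = ?y" if "A \<le> y" "f A \<noteq> 0" "g (\<lambda>i. y i - A i) \<noteq> 0" "wt v y \<le> wt v ?y" for A y
  proof -
    have e: "wt v y = wt v A + wt v (\<lambda>i. y i - A i)" using that(1) by (rule wt_diff)
    have "A = a"
    proof (rule ccontr)
      assume "A \<noteq> a"
      then have "wt v a < wt v A" using assms(1) that(2) unfolding minset_def Supp_def by auto
      then show False using e lowb[OF that(3)] that(4) by (simp add: wt_add)
    qed
    moreover have "(\<lambda>i. y i - A i) = b"
    proof (rule ccontr)
      assume "(\<lambda>i. y i - A i) \<noteq> b"
      then have "wt v b < wt v (\<lambda>i. y i - A i)" using assms(2) that(3) unfolding minset_def Supp_def by auto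
      then show False using e low[OF that(2)] that(4) by (simp add: wt_add)
    qed
    ultimately show ?thesis
    proof -
      assume h: "A = a" "(\<lambda>i. y i - A i) = b"
      show ?thesis
      proof
        fix i
        have "y i - A i = b i" using h(2) by (rule fun_cong)
        moreover have "A i \<le> y i" using that(1) by (simp add: le_fun_def)
        ultimately show "y i = a i + b i" using h(1) by simp
      qed
    qed
  qed
  have ab: "(\<lambda>i. ?y i - a i) = b" by auto
  have val: "ps_mult f g ?y = f a * g b"
  proof -
    have fin: "finite {A. A \<le> ?y}" by (rule finite_le_fun)
    have mem: "a \<in> {A. A \<le> ?y}" by (auto simp: le_fun_def)
    have "ps_mult f g ?y = f a * g (\<lambda>i. ?y i - a i) + (\<Sum>A\<in>{A. A \<le> ?y} - {a}. f A * g (\<lambda>i. ?y i - A i))"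
      unfolding ps_mult_def by (rule sum.remove[OF fin mem])
    also have "(\<Sum>A\<in>{A. A \<le> ?y} - {a}. f A * g (\<lambda>i. ?y i - A i)) = 0"
    proof (rule sum.neutral, rule ballI)
      fix A assume A: "A \<in> {A. A \<le> ?y} - {a}"
      show "f A * g (\<lambda>i. ?y i - A i) = 0"
      proof (rule ccontr)
        assume "f A * g (\<lambda>i. ?y i - A i) \<noteq> 0"
        then have "f A \<noteq> 0" "g (\<lambda>i. ?y i - A i) \<noteq> 0" by auto
        have "A = a"
        proof (rule ccontr)
          assume "A \<noteq> a"
          then have "wt v a < wt v A" using assms(1) \<open>f A \<noteq> 0\<close> unfolding minset_def Supp_def by auto
          moreover have "wt v ?y = wt v A + wt v (\<lambda>i. ?y i - A i)" using A by (intro wt_diff) auto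
          ultimately show False using lowb[OF \<open>g (\<lambda>i. ?y i - A i) \<noteq> 0\<close>] by (simp add: wt_add)
        qed
        then show False using A by auto
      qed
    qed
    finally show ?thesis using ab by simp
  qed
  show "ps_mult f g ?y = f a * g b" by (rule val)
  show "minset v (Supp (ps_mult f g)) ?y"
    unfolding minset_def
  proof (intro conjI ballI impI)
    show "?y \<in> Supp (ps_mult f g)" using val assms unfolding minset_def Supp_def by auto
  next
    fix y assume y: "y \<in> Supp (ps_mult f g)" "y \<noteq> ?y"
    show "wt v ?y < wt v y"
    proof (rule ccontr)
      assume nl: "\<not> wt v ?y < wt v y"
      obtain A where A: "A \<le> y" "f A * g (\<lambda>i. y i - A i) \<noteq> 0"
        using sum.not_neutral_contains_not_neutral[of "\<lambda>A. f A * g (\<lambda>i. y i - A i)" "{A. A \<le> y}"] y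
        unfolding ps_mult_def Supp_def by blast
      then have "y = ?y" using key[of A y] nl by auto
      then show False using y by simp
    qed
  qed
qed



lemma cfc_prod: "comp_fun_commute (\<lambda>i acc. ps_mult ((F::'a \<Rightarrow> ('m::finite,'k::comm_ring_1) ps) i) acc)"
proof
  fix x y
  show "(\<lambda>acc. ps_mult (F y) acc) \<circ> (\<lambda>acc. ps_mult (F x) acc) = (\<lambda>acc. ps_mult (F x) acc) \<circ> (\<lambda>acc. ps_mult (F y) acc)"
    by (rule ext) (simp add: ps_mult_assoc[symmetric] ps_mult_comm[of "F x"])
qed

lemma ps_prod_empty: "ps_prod F {} = ps_one"
  unfolding ps_prod_def by simp

lemma ps_prod_insert:
  "finite I \<Longrightarrow> p \<notin> I \<Longrightarrow> ps_prod F (insert p I) = ps_mult (F p) (ps_prod F I)"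
  unfolding ps_prod_def by (simp add: comp_fun_commute_on.fold_insert[OF cfc_prod[unfolded comp_fun_commute_def']])

lemma supp_one: "Supp (ps_one::('m::finite,'k::comm_ring_1) ps) = {\<lambda>i. 0}"
  unfolding Supp_def ps_one_def by auto

lemma minset_one: "minset v (Supp (ps_one::('m::finite,'k::comm_ring_1) ps)) (\<lambda>i. 0)"
  unfolding supp_one minset_def by auto

lemma supp_prod:
  fixes F :: "'a \<Rightarrow> ('m::finite,'k::comm_ring_1) ps"
  assumes "finite I"
  shows "Supp (ps_prod F I) \<subseteq> msum_fin I (\<lambda>p. Supp (F p))"
  using assms
proof (induction I rule: finite_induct)
  case empty
  then show ?case by (simp add: ps_prod_empty supp_one msum_fin_empty)
next
  case (insert p I)
  have "Supp (ps_prod F (insert p I)) \<subseteq> msum (Supp (F p)) (Supp (ps_prod F I))"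
    using insert supp_mult[of "F p" "ps_prod F I"] by (auto simp: ps_prod_insert Supp_def[of "ps_mult _ _"])
  also have "\<dots> \<subseteq> msum (Supp (F p)) (msum_fin I (\<lambda>p. Supp (F p)))"
    using insert by (intro msum_mono) auto
  finally show ?case using insert by (simp add: msum_fin_insert)
qed

lemma minset_prod:
  fixes F :: "'a \<Rightarrow> ('m::finite,'k::idom) ps"
  assumes "finite I" "\<forall>p\<in>I. minset v (Supp (F p)) (m p)"
  shows "minset v (Supp (ps_prod F I)) (\<lambda>i. \<Sum>p\<in>I. m p i)"
  using assms
proof (induction I rule: finite_induct)
  case empty
  then show ?case by (simp add: ps_prod_empty minset_one)
next
  case (insert p I)
  have "minset v (Supp (ps_mult (F p) (ps_prod F I))) (\<lambda>i. m p i + (\<lambda>i. \<Sum>p\<in>I. m p i) i)"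
    using insert by (intro minset_mult) auto
  then show ?case using insert by (simp add: ps_prod_insert)
qed

lemma ps_pow_Suc: "ps_pow f (Suc k) = ps_mult f (ps_pow f k)"
  unfolding ps_pow_def by simp

lemma ps_pow_0: "ps_pow f 0 = ps_one"
  unfolding ps_pow_def by simp

lemma supp_pow:
  fixes f :: "('m::finite,'k::comm_ring_1) ps"
  shows "Supp (ps_pow f k) \<subseteq> kfold k (Supp f)"
proof (induction k)
  case 0
  then show ?case by (simp add: ps_pow_0 supp_one kfold_0)
next
  case (Suc k)
  have "Supp (ps_pow f (Suc k)) \<subseteq> msum (Supp f) (Supp (ps_pow f k))"
    using supp_mult[of f "ps_pow f k"] by (auto simp: ps_pow_Suc Supp_def[of "ps_mult _ _"])
  also have "\<dots> \<subseteq> msum (Supp f) (kfold k (Supp f))"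
    using Suc by (intro msum_mono) auto
  finally show ?case by (simp add: kfold_Suc)
qed

lemma minset_pow:
  fixes f :: "('m::finite,'k::idom) ps"
  assumes "minset v (Supp f) m"
  shows "minset v (Supp (ps_pow f k)) (\<lambda>i. k * m i)"
proof (induction k)
  case 0
  then show ?case by (simp add: ps_pow_0 minset_one)
next
  case (Suc k)
  have "minset v (Supp (ps_mult f (ps_pow f k))) (\<lambda>i. m i + (\<lambda>i. k * m i) i)"
    using Suc assms by (intro minset_mult) auto
  then show ?case by (simp add: ps_pow_Suc)
qed

section \<open>Theta\<close>

lemma deriv_commute: "ps_deriv k \<circ> ps_deriv l = ps_deriv l \<circ> (ps_deriv k :: ('m, 'k::comm_ring_1) ps \<Rightarrow> _)"
proof (rule ext, rule ext)
  fix f :: "('m, 'k) ps" and A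
  show "(ps_deriv k \<circ> ps_deriv l) f A = (ps_deriv l \<circ> ps_deriv k) f A"
  proof (cases "k = l")
    case True
    then show ?thesis by simp
  next
    case False
    then show ?thesis by (simp add: ps_deriv_def fun_upd_twist algebra_simps)
  qed
qed

lemma cfc_deriv: "comp_fun_commute (ps_deriv :: 'm \<Rightarrow> ('m, 'k::comm_ring_1) ps \<Rightarrow> _)"
  by standard (rule deriv_commute)

lemma deriv_pow_nz:
  fixes g :: "('m, 'k::field_char_0) ps"
  shows "(ps_deriv k ^^ n) g A \<noteq> 0 \<longleftrightarrow> g (A(k := A k + n)) \<noteq> 0"
proof (induction n arbitrary: A)
  case 0
  then show ?case by simp
next
  case (Suc n)
  have "(ps_deriv k ^^ Suc n) g A = of_nat (A k + 1) * (ps_deriv k ^^ n) g (A(k := A k + 1))"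
    by (simp add: ps_deriv_def)
  moreover have "(of_nat (A k + 1) :: 'k) \<noteq> 0" by (simp del: of_nat_Suc)
  ultimately have "(ps_deriv k ^^ Suc n) g A \<noteq> 0 \<longleftrightarrow> (ps_deriv k ^^ n) g (A(k := A k + 1)) \<noteq> 0"
    by simp
  also have "\<dots> \<longleftrightarrow> g ((A(k := A k + 1))(k := (A(k := A k + 1)) k + n)) \<noteq> 0"
    by (rule Suc.IH)
  also have "(A(k := A k + 1))(k := (A(k := A k + 1)) k + n) = A(k := A k + Suc n)" by simp
  finally show ?case .
qed

lemma fold_Theta_nz:
  fixes f :: "('m::finite, 'k::field_char_0) ps"
  assumes "finite F"
  shows "Finite_Set.fold (\<lambda>k. ps_deriv k ^^ J k) f F A \<noteq> 0 \<longleftrightarrow>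
         f (\<lambda>i. A i + (if i \<in> F then J i else 0)) \<noteq> 0"
  using assms
proof (induction F arbitrary: A rule: finite_induct)
  case empty
  then show ?case by simp
next
  case (insert k F)
  have "Finite_Set.fold (\<lambda>k. ps_deriv k ^^ J k) f (insert k F) =
        (ps_deriv k ^^ J k) (Finite_Set.fold (\<lambda>k. ps_deriv k ^^ J k) f F)"
    using insert by (simp add: comp_fun_commute_on.fold_insert[OF comp_fun_commute.comp_fun_commute_funpow[OF cfc_deriv, unfolded comp_fun_commute_def']])
  then have "Finite_Set.fold (\<lambda>k. ps_deriv k ^^ J k) f (insert k F) A \<noteq> 0 \<longleftrightarrow>
     Finite_Set.fold (\<lambda>k. ps_deriv k ^^ J k) f F (A(k := A k + J k)) \<noteq> 0"
    by (simp add: deriv_pow_nz)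
  also have "\<dots> \<longleftrightarrow> f (\<lambda>i. (A(k := A k + J k)) i + (if i \<in> F then J i else 0)) \<noteq> 0"
    by (rule insert.IH)
  also have "(\<lambda>i. (A(k := A k + J k)) i + (if i \<in> F then J i else 0)) =
             (\<lambda>i. A i + (if i \<in> insert k F then J i else 0))"
    using insert by (auto simp: fun_eq_iff)
  finally show ?case .
qed

lemma supp_Theta:
  fixes f :: "('m::finite, 'k::field_char_0) ps"
  shows "Supp (Theta J f) = Theta_trop J (Supp f)"
proof -
  have nz: "Theta J f A \<noteq> 0 \<longleftrightarrow> f (\<lambda>i. A i + J i) \<noteq> 0" for A
    unfolding Theta_def using fold_Theta_nz[of UNIV J f A] by simp
  show ?thesis
  proof (intro set_eqI iffI)
    fix A assume "A \<in> Supp (Theta J f)"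
    then have "f (\<lambda>i. A i + J i) \<noteq> 0" using nz unfolding Supp_def by auto
    then show "A \<in> Theta_trop J (Supp f)"
      unfolding Theta_trop_def Supp_def
      by (intro CollectI exI[of _ "\<lambda>i. A i + J i"]) auto
  next
    fix A assume "A \<in> Theta_trop J (Supp f)"
    then obtain s where s: "A = (\<lambda>i. s i - J i)" "f s \<noteq> 0" "\<forall>i. J i \<le> s i"
      unfolding Theta_trop_def Supp_def by auto
    then have "(\<lambda>i. A i + J i) = s" by auto
    then show "A \<in> Supp (Theta J f)" using nz s unfolding Supp_def by auto
  qed
qed



definition wvec :: "('m::finite \<Rightarrow> nat) \<Rightarrow> real ^ 'm" where
  "wvec v = (\<chi> k. real (v k))"

lemma inner_wvec_embed: "inner (wvec v) (embed x) = real (wt v x)"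
  unfolding wvec_def embed_def wt_def inner_vec_def by simp

lemma Vert_subset: "Vert X \<subseteq> X"
  unfolding Vert_def by auto

lemma Newton_mono: "X \<subseteq> Y \<Longrightarrow> Newton X \<subseteq> Newton Y"
  unfolding Newton_def by (rule hull_mono) blast

lemma minset_Vert:
  assumes "minset v X a"
  shows "a \<in> Vert X"
proof -
  let ?H = "{p. inner (wvec v) p > real (wt v a)}"
  have "{embed (\<lambda>i. x i + d i) | x d. x \<in> X - {a}} \<subseteq> ?H"
  proof
    fix p assume "p \<in> {embed (\<lambda>i. x i + d i) | x d. x \<in> X - {a}}"
    then obtain x d where xd: "p = embed (\<lambda>i. x i + d i)" "x \<in> X" "x \<noteq> a" by auto
    then have "wt v a < wt v x" using assms unfolding minset_def by auto
    then have "wt v a < wt v (\<lambda>i. x i + d i)" by (simp add: wt_add)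
    then show "p \<in> ?H" using xd by (simp add: inner_wvec_embed)
  qed
  then have "Newton (X - {a}) \<subseteq> ?H"
    unfolding Newton_def by (intro hull_minimal convex_halfspace_gt)
  moreover have "embed a \<notin> ?H" by (simp add: inner_wvec_embed)
  ultimately show ?thesis using assms unfolding Vert_def minset_def by auto
qed



definition mw :: "('m::finite \<Rightarrow> nat) \<Rightarrow> ('m \<Rightarrow> nat) set \<Rightarrow> nat" where
  "mw v X = (LEAST n. \<exists>x\<in>X. wt v x = n)"

lemma mw_le: "x \<in> X \<Longrightarrow> mw v X \<le> wt v x"
  unfolding mw_def by (rule Least_le) blast

lemma mw_ex: "X \<noteq> {} \<Longrightarrow> \<exists>x\<in>X. wt v x = mw v X"
  unfolding mw_def by (rule LeastI_ex) blast

lemma wt_smult: "wt v (\<lambda>i. k * m i) = k * wt v m"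
  unfolding wt_def by (simp add: sum_distrib_left algebra_simps)

lemma kfold_bound:
  "t \<in> kfold k Y \<Longrightarrow> k * mw v Y \<le> wt v t \<and> (0 < k \<longrightarrow> Y \<noteq> {})"
proof (induction k arbitrary: t)
  case 0
  then show ?case by simp
next
  case (Suc k)
  then obtain a b where ab: "t = (\<lambda>i. a i + b i)" "a \<in> Y" "b \<in> kfold k Y"
    by (auto simp: kfold_Suc msum_def)
  from Suc.IH[OF ab(3)] have "k * mw v Y \<le> wt v b" by simp
  moreover have "mw v Y \<le> wt v a" by (rule mw_le[OF ab(2)])
  ultimately show ?case using ab by (auto simp: wt_add)
qed

lemma msum_fin_bound:
  assumes "finite I" "t \<in> msum_fin I Z" "\<forall>p\<in>I. \<forall>z\<in>Z p. L p \<le> wt v z"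
  shows "(\<Sum>p\<in>I. L p) \<le> wt v t"
proof -
  obtain g where g: "t = (\<lambda>i. \<Sum>p\<in>I. g p i)" "\<forall>p\<in>I. g p \<in> Z p"
    using assms(2) unfolding msum_fin_def by auto
  have "(\<Sum>p\<in>I. L p) \<le> (\<Sum>p\<in>I. wt v (g p))"
    using g assms(3) by (intro sum_mono) auto
  also have "\<dots> = wt v t" using g assms(1) by (simp add: wt_sum)
  finally show ?thesis .
qed

lemma msum_fin_nonempty: "t \<in> msum_fin I Z \<Longrightarrow> p \<in> I \<Longrightarrow> Z p \<noteq> {}"
  unfolding msum_fin_def by auto

context
  fixes v :: "'m::finite \<Rightarrow> nat" and J :: "'m \<Rightarrow> nat" and U :: "('m \<Rightarrow> nat) set"
  assumes P1: "\<forall>x\<in>U. x \<noteq> J \<longrightarrow> wt v J < wt v x"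
    and P2: "\<forall>x y. wt v x = wt v y \<longrightarrow> wt v x \<le> wt v J \<longrightarrow> x = y"
begin

lemma minset_of_min:
  assumes "m \<in> X" "wt v m = mw v X" "wt v m \<le> wt v J"
  shows "minset v X m"
  unfolding minset_def
proof (intro conjI ballI impI)
  show "m \<in> X" by fact
next
  fix x assume x: "x \<in> X" "x \<noteq> m"
  have "wt v m \<le> wt v x" using assms mw_le[OF x(1)] by simp
  moreover have "wt v m \<noteq> wt v x" using P2 assms(3) x(2) by metis
  ultimately show "wt v m < wt v x" by simp
qed

lemma per_mono:
  fixes P :: "('n::finite, 'm, 'k::field_char_0) dpoly" and \<phi> :: "'n \<Rightarrow> ('m, 'k) ps"
  assumes M: "P M \<noteq> ps_zero" "finite (mono_supp M)"
    and U: "msum (trop_ps (P M)) (trop_mono_eval M (\<lambda>i. Supp (\<phi> i))) \<subseteq> U"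
  shows "J \<in> msum (trop_ps (P M)) (trop_mono_eval M (\<lambda>i. Supp (\<phi> i)))
           \<longleftrightarrow> ps_mult (P M) (mono_eval M \<phi>) J \<noteq> 0"
proof -
  let ?I = "mono_supp M"
  let ?X0 = "Supp (P M)"
  let ?F = "\<lambda>p. Theta (snd p) (\<phi> (fst p))"
  let ?Xp = "\<lambda>p. Supp (?F p)"
  let ?T = "msum_fin ?I (\<lambda>p. kfold (M p) (?Xp p))"
  let ?c = "ps_mult (P M) (mono_eval M \<phi>)"
  have tme: "trop_mono_eval M (\<lambda>i. Supp (\<phi> i)) = Vert ?T"
    unfolding trop_mono_eval_def by (simp add: supp_Theta)
  have tp: "trop_ps (P M) = Vert ?X0" unfolding trop_ps_def ..
  have me: "mono_eval M \<phi> = ps_prod (\<lambda>p. ps_pow (?F p) (M p)) ?I"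
    unfolding mono_eval_def ..
  have Mpos: "\<forall>p\<in>?I. 0 < M p" unfolding mono_supp_def by auto
  have X0ne: "?X0 \<noteq> {}" using M(1) unfolding Supp_def ps_zero_def by auto
  define good where "good \<longleftrightarrow> (\<forall>p\<in>?I. ?Xp p \<noteq> {}) \<and>
      mw v ?X0 + (\<Sum>p\<in>?I. M p * mw v (?Xp p)) \<le> wt v J"
  have to_good: "good" if h: "J \<in> msum ?X0 ?T"
  proof -
    obtain a t where at: "J = (\<lambda>i. a i + t i)" "a \<in> ?X0" "t \<in> ?T"
      using h unfolding msum_def by blast
    have ne: "\<forall>p\<in>?I. ?Xp p \<noteq> {}"
    proof
      fix p assume p: "p \<in> ?I"
      have "kfold (M p) (?Xp p) \<noteq> {}" using msum_fin_nonempty[OF at(3) p] .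
      then obtain z where "z \<in> kfold (M p) (?Xp p)" by auto
      then show "?Xp p \<noteq> {}" using kfold_bound[of z "M p" "?Xp p" v] Mpos p by auto
    qed
    have "(\<Sum>p\<in>?I. M p * mw v (?Xp p)) \<le> wt v t"
      using M(2) at(3) by (rule msum_fin_bound) (auto dest: kfold_bound[where v=v])
    moreover have "mw v ?X0 \<le> wt v a" by (rule mw_le[OF at(2)])
    ultimately show ?thesis using ne at(1) unfolding good_def by (simp add: wt_add)
  qed
  have from_good: "J \<in> msum (Vert ?X0) (Vert ?T) \<and> ?c J \<noteq> 0" if g: good
  proof -
    obtain m0 where m0: "m0 \<in> ?X0" "wt v m0 = mw v ?X0" using mw_ex[OF X0ne] by auto
    have "\<forall>p\<in>?I. \<exists>m. m \<in> ?Xp p \<and> wt v m = mw v (?Xp p)"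
      using g mw_ex unfolding good_def by blast
    then obtain mp where mp: "\<forall>p\<in>?I. mp p \<in> ?Xp p \<and> wt v (mp p) = mw v (?Xp p)" by metis
    have sumle: "mw v ?X0 + (\<Sum>p\<in>?I. M p * mw v (?Xp p)) \<le> wt v J" using g unfolding good_def by simp
    have "minset v ?X0 m0"
      using m0 sumle by (intro minset_of_min) auto
    moreover have mps: "\<forall>p\<in>?I. minset v (?Xp p) (mp p)"
    proof
      fix p assume p: "p \<in> ?I"
      have "1 \<le> M p" using Mpos p by fastforce
      then have "mw v (?Xp p) \<le> M p * mw v (?Xp p)" by simp
      also have "\<dots> \<le> (\<Sum>p\<in>?I. M p * mw v (?Xp p))" using M(2) p by (intro member_le_sum) auto
      finally have "wt v (mp p) \<le> wt v J" using mp p sumle by auto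
      then show "minset v (?Xp p) (mp p)" using mp p by (intro minset_of_min) auto
    qed
    define ZT where "ZT = (\<lambda>i. \<Sum>p\<in>?I. (\<lambda>i. M p * mp p i) i)"
    have mT: "minset v ?T ZT"
      unfolding ZT_def using M(2) mps by (intro minset_msum_fin) (auto intro: minset_kfold)
    have mE: "minset v (Supp (mono_eval M \<phi>)) ZT"
      unfolding me ZT_def using M(2) mps by (intro minset_prod) (auto intro: minset_pow)
    define Z where "Z = (\<lambda>i. m0 i + ZT i)"
    have mc: "minset v (Supp ?c) Z"
      unfolding Z_def by (rule minset_mult) fact+
    have ZS: "Z \<in> msum (Vert ?X0) (Vert ?T)"
      unfolding Z_def msum_def using minset_Vert[OF \<open>minset v ?X0 m0\<close>] minset_Vert[OF mT] by blast
    have "wt v ZT = (\<Sum>p\<in>?I. M p * mw v (?Xp p))"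
      unfolding ZT_def using M(2) mp by (simp add: wt_sum wt_smult)
    then have "wt v Z \<le> wt v J" unfolding Z_def using m0 sumle by (simp add: wt_add)
    moreover have "Z \<in> U" using ZS U tp tme by auto
    ultimately have "Z = J" using P1 by (meson leD)
    then show ?thesis using ZS mc unfolding minset_def Supp_def by auto
  qed
  show ?thesis
  proof
    assume "J \<in> msum (trop_ps (P M)) (trop_mono_eval M (\<lambda>i. Supp (\<phi> i)))"
    then have "J \<in> msum ?X0 ?T" unfolding tme tp using msum_mono[OF Vert_subset Vert_subset] by blast
    then show "?c J \<noteq> 0" using from_good to_good by blast
  next
    assume "?c J \<noteq> 0"
    then have "J \<in> msum ?X0 (Supp (mono_eval M \<phi>))" by (rule supp_mult)
    moreover have "Supp (mono_eval M \<phi>) \<subseteq> ?T"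
    proof -
      have "Supp (mono_eval M \<phi>) \<subseteq> msum_fin ?I (\<lambda>p. Supp (ps_pow (?F p) (M p)))"
        unfolding me using M(2) by (rule supp_prod)
      also have "\<dots> \<subseteq> ?T" by (intro msum_fin_mono) (auto intro: supp_pow[THEN subsetD])
      finally show ?thesis .
    qed
    ultimately have "J \<in> msum ?X0 ?T" using msum_mono[of ?X0 ?X0] by blast
    then show "J \<in> msum (trop_ps (P M)) (trop_mono_eval M (\<lambda>i. Supp (\<phi> i)))"
      using from_good to_good unfolding tme tp by blast
  qed
qed

end



lemma Vert_sub:
  assumes "J \<in> Vert U" "J \<in> A" "A \<subseteq> U"
  shows "J \<in> Vert A"
proof -
  have "Newton (A - {J}) \<subseteq> Newton (U - {J})" using assms(3) by (intro Newton_mono) auto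
  then show ?thesis using assms unfolding Vert_def by auto
qed

lemma main_given_weight:
  fixes P :: "('n::finite, 'm::finite, 'k::field_char_0) dpoly" and \<phi> :: "'n \<Rightarrow> ('m, 'k) ps"
  defines "S \<equiv> (\<lambda>i. Supp (\<phi> i))"
  defines "U \<equiv> (\<Union>M\<in>dsupp P. msum (trop_ps (P M)) (trop_mono_eval M S))"
  assumes dp: "is_dpoly P" and ev: "dp_eval P \<phi> = ps_zero" and J: "J \<in> trop_eval P S"
    and P1: "\<forall>x\<in>U. x \<noteq> J \<longrightarrow> wt v J < wt v x"
    and P2: "\<forall>x y. wt v x = wt v y \<longrightarrow> wt v x \<le> wt v J \<longrightarrow> x = y"
  shows "\<exists>M1\<in>dsupp P. \<exists>M2\<in>dsupp P. M1 \<noteq> M2 \<and> J \<in> trop_term_eval P M1 S \<and> J \<in> trop_term_eval P M2 S"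
proof -
  let ?SM = "\<lambda>M. msum (trop_ps (P M)) (trop_mono_eval M S)"
  let ?c = "\<lambda>M. ps_mult (P M) (mono_eval M \<phi>) J"
  have JU: "J \<in> Vert U" using J unfolding trop_eval_def U_def .
  have fin: "finite (dsupp P)" using dp unfolding is_dpoly_def by auto
  have iff: "J \<in> ?SM M \<longleftrightarrow> ?c M \<noteq> 0" if M: "M \<in> dsupp P" for M
  proof -
    have "P M \<noteq> ps_zero" using M unfolding dsupp_def by auto
    moreover have "finite (mono_supp M)" using M dp unfolding is_dpoly_def by auto
    moreover have "?SM M \<subseteq> U" using M unfolding U_def by auto
    ultimately show ?thesis unfolding S_def by (rule per_mono[OF P1 P2])
  qed
  define Good where "Good = {M \<in> dsupp P. J \<in> ?SM M}"
  have "0 = dp_eval P \<phi> J" using ev unfolding ps_zero_def by simp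
  also have "\<dots> = (\<Sum>M\<in>dsupp P. ?c M)" by (simp add: dp_eval_def)
  also have "\<dots> = (\<Sum>M\<in>Good. ?c M)"
    using fin iff unfolding Good_def by (intro sum.mono_neutral_right) auto
  finally have sum0: "(\<Sum>M\<in>Good. ?c M) = 0" by simp
  have "J \<in> U" using JU unfolding Vert_def by auto
  then obtain M1 where "M1 \<in> dsupp P" "J \<in> ?SM M1" unfolding U_def by (rule UN_E)
  then have M1: "M1 \<in> Good" unfolding Good_def by blast
  have "\<exists>M2\<in>Good. M2 \<noteq> M1"
  proof (rule ccontr)
    assume "\<not> (\<exists>M2\<in>Good. M2 \<noteq> M1)"
    then have "Good = {M1}" using M1 by blast
    then have "?c M1 = 0" using sum0 by simp
    moreover have "?c M1 \<noteq> 0" using iff[of M1] M1 unfolding Good_def by blast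
    ultimately show False by simp
  qed
  then obtain M2 where M2: "M2 \<in> Good" "M2 \<noteq> M1" by blast
  have tt: "J \<in> trop_term_eval P M S" if "M \<in> Good" for M
    unfolding trop_term_eval_def
  proof (rule Vert_sub[OF JU])
    show "J \<in> ?SM M" using that unfolding Good_def by blast
    show "?SM M \<subseteq> U" using that unfolding Good_def U_def by blast
  qed
  show ?thesis using M1 M2 tt unfolding Good_def by blast
qed



lemma digits_lt: "(\<forall>i<n. f i < (B::nat)) \<Longrightarrow> (\<Sum>i<n. B^i * f i) < B^n"
proof (induction n)
  case 0
  then show ?case by simp
next
  case (Suc n)
  then have "(\<Sum>i<n. B^i * f i) < B^n" "f n + 1 \<le> B" by auto
  then have "(\<Sum>i<Suc n. B^i * f i) < B^n + B^n * f n" by simp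
  also have "\<dots> = B^n * (f n + 1)" by (simp add: algebra_simps)
  also have "\<dots> \<le> B^n * B" using \<open>f n + 1 \<le> B\<close> by (intro mult_le_mono2)
  finally show ?case by (simp add: mult.commute)
qed

lemma digits_inj:
  "(\<forall>i<n. f i < (B::nat) \<and> g i < B) \<Longrightarrow> (\<Sum>i<n. B^i * f i) = (\<Sum>i<n. B^i * g i) \<Longrightarrow> \<forall>i<n. f i = g i"
proof (induction n)
  case 0
  then show ?case by simp
next
  case (Suc n)
  have lf: "(\<Sum>i<n. B^i * f i) < B^n" and lg: "(\<Sum>i<n. B^i * g i) < B^n"
    using Suc.prems by (auto intro!: digits_lt)
  have e: "(\<Sum>i<n. B^i * f i) + B^n * f n = (\<Sum>i<n. B^i * g i) + B^n * g n"
    using Suc.prems by simp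
  have nz: "B^n \<noteq> 0" using lf by (metis less_zeroE)
  have "((\<Sum>i<n. B^i * f i) + B^n * f n) div B^n = f n"
    using lf nz by (simp add: div_mult_self2 div_less)
  moreover have "((\<Sum>i<n. B^i * g i) + B^n * g n) div B^n = g n"
    using lg nz by (simp add: div_mult_self2 div_less)
  ultimately have fn: "f n = g n" using e by simp
  have "(\<Sum>i<n. B^i * f i) = (\<Sum>i<n. B^i * g i)" using e unfolding fn by (rule add_right_imp_eq)
  then have "\<forall>i<n. f i = g i" by (rule Suc.IH[rotated]) (use Suc.prems in auto)
  then show ?case using fn less_Suc_eq by auto
qed

lemma wt_vadd: "wt (\<lambda>k. a k + b k) x = wt a x + wt b x"
  unfolding wt_def by (simp add: algebra_simps sum.distrib)

lemma wt_vsmult: "wt (\<lambda>k. c * a k) x = c * wt a x"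
  unfolding wt_def by (simp add: sum_distrib_left algebra_simps)

lemma coord_le_wt: "\<forall>k. 1 \<le> W k \<Longrightarrow> x k \<le> wt W (x::'m::finite \<Rightarrow> nat)"
proof -
  assume W: "\<forall>k. 1 \<le> W k"
  have "x k \<le> W k * x k" using W by simp
  also have "\<dots> \<le> wt W x" unfolding wt_def by (rule member_le_sum) auto
  finally show ?thesis .
qed

lemma generic_weight:
  fixes J :: "'m::finite \<Rightarrow> nat"
  assumes W1: "\<forall>k. 1 \<le> W k" and WU: "\<forall>x\<in>U. x \<noteq> J \<longrightarrow> wt W J < wt W x"
  shows "\<exists>v. (\<forall>x\<in>U. x \<noteq> J \<longrightarrow> wt v J < wt v x) \<and>
             (\<forall>x y. wt v x = wt v y \<longrightarrow> wt v x \<le> wt v J \<longrightarrow> x = y)"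
proof -
  define n where "n = CARD('m)"
  obtain h where h: "bij_betw h (UNIV::'m set) {0..<n}"
    using ex_bij_betw_finite_nat[of "UNIV::'m set"] unfolding n_def by auto
  define c where "c = wt W J"
  define B where "B = Suc c"
  define Q where "Q = B ^ n"
  define e where "e = (\<lambda>k. B ^ h k)"
  define v where "v = (\<lambda>k. Q * W k + e k)"
  have wv: "wt v x = Q * wt W x + wt e x" for x
    unfolding v_def by (simp add: wt_vadd wt_vsmult)
  define g where "g = (\<lambda>(x::'m \<Rightarrow> nat) i. x (inv_into UNIV h i))"
  have ee: "wt e x = (\<Sum>i<n. B^i * g x i)" for x
  proof -
    have "wt e x = (\<Sum>k\<in>UNIV. B ^ h k * g x (h k))"
      unfolding wt_def e_def g_def using h by (simp add: bij_betw_inv_into_left)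
    also have "\<dots> = (\<Sum>i\<in>{0..<n}. B^i * g x i)"
      by (rule sum.reindex_bij_betw[OF h, where g="\<lambda>i. B^i * g x i"])
    finally show ?thesis by (simp add: atLeast0LessThan)
  qed
  have small: "wt e x < Q" if "wt W x \<le> c" for x
  proof -
    have "\<forall>i<n. g x i < B"
      unfolding g_def B_def using coord_le_wt[OF W1] that by (meson le_imp_less_Suc order_trans)
    then show ?thesis unfolding ee Q_def by (rule digits_lt)
  qed
  have eJ: "wt e J < Q" by (rule small) (simp add: c_def)
  have P1: "\<forall>x\<in>U. x \<noteq> J \<longrightarrow> wt v J < wt v x"
  proof (intro ballI impI)
    fix x assume "x \<in> U" "x \<noteq> J"
    then have "c + 1 \<le> wt W x" using WU unfolding c_def by auto
    then have "Q * (c + 1) \<le> Q * wt W x" by (rule mult_le_mono2)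
    moreover have "wt v J < Q * (c + 1)" using eJ unfolding wv c_def by simp
    ultimately show "wt v J < wt v x" unfolding wv by linarith
  qed
  have P2: "\<forall>x y. wt v x = wt v y \<longrightarrow> wt v x \<le> wt v J \<longrightarrow> x = y"
  proof (intro allI impI)
    fix x y assume xy: "wt v x = wt v y" "wt v x \<le> wt v J"
    have bnd: "wt W z \<le> c" if "wt v z \<le> wt v J" for z
    proof -
      have "Q * wt W z \<le> wt v z" unfolding wv by simp
      also have "\<dots> \<le> wt v J" by fact
      also have "\<dots> < Q * (c + 1)" using eJ unfolding wv c_def by simp
      finally have "wt W z < c + 1" by (simp only: mult_less_cancel1)
      then show ?thesis by simp
    qed
    have bx: "wt W x \<le> c" and by': "wt W y \<le> c" using bnd xy by auto
    have sx: "wt e x < Q" and sy: "wt e y < Q" using small bx by' by auto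
    have "(Q * wt W x + wt e x) mod Q = (Q * wt W y + wt e y) mod Q" using xy unfolding wv by simp
    then have "wt e x = wt e y" using sx sy by simp
    moreover have "\<forall>i<n. g x i < B \<and> g y i < B"
      unfolding g_def B_def using coord_le_wt[OF W1] bx by' by (meson le_imp_less_Suc order_trans)
    ultimately have gi: "\<forall>i<n. g x i = g y i" unfolding ee using digits_inj by blast
    show "x = y"
    proof
      fix k
      have "h k < n" using h by (auto simp: bij_betw_def)
      then have "g x (h k) = g y (h k)" using gi by auto
      then show "x k = y k" unfolding g_def using h by (simp add: bij_betw_inv_into_left)
    qed
  qed
  show ?thesis by (rule exI[of _ v], rule conjI[OF P1 P2])
qed



lemma dickson_gen:
  fixes K :: "'m set"
  assumes "finite K"
  shows "\<forall>X::('m \<Rightarrow> nat) set. \<exists>F. finite F \<and> F \<subseteq> X \<and> (\<forall>x\<in>X. \<exists>f\<in>F. \<forall>i\<in>K. f i \<le> x i)"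
  using assms
proof (induction K rule: finite_induct)
  case empty
  show ?case
  proof
    fix X :: "('m \<Rightarrow> nat) set"
    show "\<exists>F. finite F \<and> F \<subseteq> X \<and> (\<forall>x\<in>X. \<exists>f\<in>F. \<forall>i\<in>{}. f i \<le> x i)"
    proof (cases "X = {}")
      case True
      then show ?thesis by auto
    next
      case False
      then obtain x0 where "x0 \<in> X" by auto
      then show ?thesis by (intro exI[of _ "{x0}"]) simp
    qed
  qed
next
  case (insert k K)
  show ?case
  proof
    fix X :: "('m \<Rightarrow> nat) set"
    obtain F0 where F0: "finite F0" "F0 \<subseteq> X" "\<forall>x\<in>X. \<exists>f\<in>F0. \<forall>i\<in>K. f i \<le> x i"
      using spec[OF insert.IH, of X] by (elim exE conjE) blast
    have "\<forall>a. \<exists>F. finite F \<and> F \<subseteq> {x\<in>X. x k = a} \<and> (\<forall>x\<in>{x\<in>X. x k = a}. \<exists>f\<in>F. \<forall>i\<in>K. f i \<le> x i)"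
      by (intro allI, rule spec[OF insert.IH])
    from choice[OF this] obtain Fv where Fv: "\<forall>a. finite (Fv a) \<and> Fv a \<subseteq> {x\<in>X. x k = a} \<and>
        (\<forall>x\<in>{x\<in>X. x k = a}. \<exists>f\<in>Fv a. \<forall>i\<in>K. f i \<le> x i)"
      by blast
    define N where "N = (\<Sum>f\<in>F0. f k)"
    define F where "F = F0 \<union> (\<Union>a<N. Fv a)"
    have "finite F" unfolding F_def using F0 Fv by auto
    moreover have "F \<subseteq> X" unfolding F_def using F0 Fv by blast
    moreover have "\<forall>x\<in>X. \<exists>f\<in>F. \<forall>i\<in>insert k K. f i \<le> x i"
    proof
      fix x assume x: "x \<in> X"
      obtain f where f: "f \<in> F0" "\<forall>i\<in>K. f i \<le> x i" using F0 x by blast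
      show "\<exists>f\<in>F. \<forall>i\<in>insert k K. f i \<le> x i"
      proof (cases "f k \<le> x k")
        case True
        then show ?thesis using f unfolding F_def by auto
      next
        case False
        have "f k \<le> N" unfolding N_def using F0(1) f(1) by (intro member_le_sum) simp_all
        then have xN: "x k < N" using False by simp
        have "x \<in> {y\<in>X. y k = x k}" using x by simp
        then obtain f' where f': "f' \<in> Fv (x k)" "\<forall>i\<in>K. f' i \<le> x i" using Fv by blast
        have "f' k = x k" using f' Fv by blast
        moreover have "f' \<in> F" unfolding F_def using f' xN by blast
        ultimately show ?thesis using f'(2) by (intro bexI[of _ f']) auto
      qed
    qed
    ultimately show "\<exists>F. finite F \<and> F \<subseteq> X \<and> (\<forall>x\<in>X. \<exists>f\<in>F. \<forall>i\<in>insert k K. f i \<le> x i)"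
      by blast
  qed
qed

lemma dickson:
  fixes X :: "('m::finite \<Rightarrow> nat) set"
  shows "\<exists>F. finite F \<and> F \<subseteq> X \<and> (\<forall>x\<in>X. \<exists>f\<in>F. f \<le> x)"
  using dickson_gen[of "UNIV::'m set"] by (auto simp: le_fun_def)



lemma orth_hull_gen:
  fixes K :: "'m::finite set"
  assumes "finite K"
  shows "\<forall>d::real^'m. (\<forall>k. 0 \<le> d$k) \<longrightarrow> (\<forall>k. k \<notin> K \<longrightarrow> d$k \<in> \<int>) \<longrightarrow>
           d \<in> convex hull (range (embed :: ('m \<Rightarrow> nat) \<Rightarrow> real^'m))"
  using assms
proof (induction K rule: finite_induct)
  case empty
  show ?case
  proof (intro allI impI)
    fix d :: "real^'m"
    assume d: "\<forall>k. 0 \<le> d$k" "\<forall>k. k \<notin> {} \<longrightarrow> d$k \<in> \<int>"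
    have "d = embed (\<lambda>k. nat \<lfloor>d$k\<rfloor>)"
    proof (unfold embed_def vec_eq_iff, intro allI)
      fix k
      have "d$k \<in> \<int>" using d by auto
      then obtain z where z: "d$k = of_int z" by (auto elim: Ints_cases)
      then have "0 \<le> z" using d(1) by (metis of_int_0_le_iff)
      then show "d $ k = (\<chi> i. real (nat \<lfloor>d $ i\<rfloor>)) $ k" using z by simp
    qed
    then show "d \<in> convex hull (range embed)" by (simp add: hull_inc)
  qed
next
  case (insert k K)
  show ?case
  proof (intro allI impI)
    fix d :: "real^'m"
    assume d: "\<forall>k. 0 \<le> d$k" "\<forall>j. j \<notin> insert k K \<longrightarrow> d$j \<in> \<int>"
    define fl where "fl = real_of_int \<lfloor>d$k\<rfloor>"
    define t where "t = d$k - fl"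
    define d1 where "d1 = (\<chi> j. if j = k then fl else d$j)"
    define d2 where "d2 = (\<chi> j. if j = k then fl + 1 else d$j)"
    have fl0: "0 \<le> fl" unfolding fl_def using d(1) by simp
    have t01: "0 \<le> t" "t \<le> 1" unfolding t_def fl_def by (simp_all add: of_int_floor_le) linarith
    have h1: "d1 \<in> convex hull (range embed)"
      using insert.IH fl0 d unfolding d1_def by (auto simp: fl_def)
    have h2: "d2 \<in> convex hull (range embed)"
      using insert.IH fl0 d unfolding d2_def by (auto simp: fl_def)
    have "d = (1 - t) *\<^sub>R d1 + t *\<^sub>R d2"
      unfolding vec_eq_iff d1_def d2_def t_def by (auto simp: algebra_simps)
    moreover have "(1 - t) *\<^sub>R d1 + t *\<^sub>R d2 \<in> convex hull (range embed)"
      using t01 by (intro convexD[OF convex_convex_hull h1 h2]) auto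
    ultimately show "d \<in> convex hull (range embed)" by simp
  qed
qed

lemma orth_hull: "\<forall>k. 0 \<le> (d::real^'m::finite)$k \<Longrightarrow> d \<in> convex hull (range (embed :: ('m \<Rightarrow> nat) \<Rightarrow> real^'m))"
  using orth_hull_gen[of "UNIV::'m set"] by auto

lemma embed_add: "embed (\<lambda>i. a i + b i) = embed a + embed b"
  unfolding embed_def vec_eq_iff by simp

lemma inner_embed: "inner a (embed x) = (\<Sum>k\<in>UNIV. a$k * real (x k))"
  unfolding inner_vec_def embed_def by simp


lemma ceilA: "0 \<le> (y::real) \<Longrightarrow> real (nat \<lceil>y\<rceil>) = real_of_int \<lceil>y\<rceil>"
  by (simp add: of_nat_nat)
lemma ceilB: "0 \<le> (y::real) \<Longrightarrow> y \<le> real (nat \<lceil>y\<rceil> + 1)"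
proof -
  assume "0 \<le> y"
  then have "real (nat \<lceil>y\<rceil>) = real_of_int \<lceil>y\<rceil>" by (rule ceilA)
  moreover have "y \<le> real_of_int \<lceil>y\<rceil>" by (rule le_of_int_ceiling)
  ultimately show ?thesis by (simp only: of_nat_add of_nat_1)
qed
lemma ceilC: "0 \<le> (y::real) \<Longrightarrow> real (nat \<lceil>y\<rceil> + 1) \<le> y + 2"
proof -
  assume "0 \<le> y"
  then have "real (nat \<lceil>y\<rceil>) = real_of_int \<lceil>y\<rceil>" by (rule ceilA)
  moreover have "real_of_int \<lceil>y\<rceil> \<le> y + 1" by (rule of_int_ceiling_le_add_one)
  ultimately show ?thesis by (simp only: of_nat_add of_nat_1)
qed

lemma sep_weight:
  fixes U :: "('m::finite \<Rightarrow> nat) set"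
  assumes JV: "J \<in> Vert U"
  shows "\<exists>W. (\<forall>k. 1 \<le> W k) \<and> (\<forall>x\<in>U. x \<noteq> J \<longrightarrow> wt W J < wt W x)"
proof (cases "U - {J} = {}")
  case True
  have h1: "\<forall>x\<in>U. x \<noteq> J \<longrightarrow> wt (\<lambda>_. 1) J < wt (\<lambda>_. 1) x"
  proof (intro ballI impI)
    fix x assume "x \<in> U" "x \<noteq> J"
    then have "x \<in> U - {J}" by simp
    then show "wt (\<lambda>_. 1) J < wt (\<lambda>_. 1) x" using True by (simp only: empty_iff)
  qed
  have h2: "\<forall>k. (1::nat) \<le> (\<lambda>_. 1) k" by simp
  show ?thesis by (rule exI[of _ "\<lambda>_. 1"], rule conjI[OF h2 h1])
next
  case False
  define X where "X = U - {J}"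
  obtain F where F: "finite F" "F \<subseteq> X" "\<forall>x\<in>X. \<exists>f\<in>F. f \<le> x" using dickson[of X] by blast
  obtain f0 where f0: "f0 \<in> F"
  proof -
    have "X \<noteq> {}" using False unfolding X_def .
    then obtain x where "x \<in> X" by blast
    then show ?thesis using F(3) that by blast
  qed
  define Orth where "Orth = {p::real^'m. \<forall>i. 0 \<le> p$i}"
  define H where "H = convex hull (embed ` F)"
  define C where "C = (\<Union>d\<in>Orth. \<Union>c\<in>H. {d + c})"
  have clC: "closed C" unfolding C_def Orth_def H_def
    by (intro closed_compact_sums closed_positive_orthant compact_convex_hull finite_imp_compact finite_imageI F)
  have cvO: "convex Orth" unfolding Orth_def
    by (rule convex_box_cart) (simp add: atLeast_def[symmetric])
  have cvC: "convex C" unfolding C_def H_def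
    by (intro convex_sums cvO convex_convex_hull)
  have cvN: "convex (Newton X)" unfolding Newton_def by (rule convex_convex_hull)
  have dN: "d + embed f \<in> Newton X" if "d \<in> Orth" "f \<in> X" for d f
  proof -
    have "d \<in> convex hull (range embed)" using that orth_hull unfolding Orth_def by auto
    then have "embed f + d \<in> (\<lambda>q. embed f + q) ` (convex hull (range embed))" by blast
    also have "\<dots> = convex hull ((\<lambda>q. embed f + q) ` range embed)" by (rule convex_hull_translation[symmetric])
    also have "\<dots> \<subseteq> Newton X" unfolding Newton_def
    proof (rule hull_mono, rule subsetI)
      fix p assume "p \<in> (\<lambda>q. embed f + q) ` range embed"
      then obtain e where "p = embed f + embed e" by auto
      then have "p = embed (\<lambda>i. f i + e i)" by (simp add: embed_add)
      then show "p \<in> {embed (\<lambda>i. x i + d i) |x d. x \<in> X}" using that(2) by blast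
    qed
    finally show ?thesis by (simp add: add.commute)
  qed
  have CN: "C \<subseteq> Newton X"
  proof
    fix p assume "p \<in> C"
    then obtain d c where dc: "d \<in> Orth" "c \<in> H" "p = d + c" unfolding C_def by blast
    have "(\<lambda>q. d + q) ` H = convex hull ((\<lambda>q. d + q) ` embed ` F)"
      unfolding H_def by (rule convex_hull_translation[symmetric])
    also have "\<dots> \<subseteq> Newton X"
      by (rule hull_minimal) (use dN dc(1) F(2) cvN in auto)
    finally show "p \<in> Newton X" using dc by blast
  qed
  have JC: "embed J \<notin> C" using JV CN unfolding Vert_def X_def by blast
  obtain a b where ab: "inner a (embed J) < b" "\<forall>x\<in>C. b < inner a x"
    using separating_hyperplane_closed_point[OF cvC clC JC] by blast
  have f0C: "t *\<^sub>R axis k 1 + embed f0 \<in> C" if "0 \<le> t" for t k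
  proof -
    have "t *\<^sub>R axis k 1 \<in> Orth" unfolding Orth_def axis_def using that by auto
    moreover have "embed f0 \<in> H" unfolding H_def using f0 by (intro hull_inc) auto
    ultimately show ?thesis unfolding C_def by blast
  qed
  have apos: "0 \<le> a$k" for k
  proof (rule ccontr)
    assume neg: "\<not> 0 \<le> a$k"
    define t where "t = (\<bar>inner a (embed f0)\<bar> + \<bar>b\<bar>) / (- a$k)"
    have t0: "0 \<le> t" unfolding t_def using neg by (intro divide_nonneg_pos) auto
    have "inner a (t *\<^sub>R axis k 1 + embed f0) = t * a$k + inner a (embed f0)"
      by (simp add: inner_add_right inner_axis)
    also have "t * a$k = - (\<bar>inner a (embed f0)\<bar> + \<bar>b\<bar>)" unfolding t_def using neg by simp
    finally have "inner a (t *\<^sub>R axis k 1 + embed f0) \<le> b" by linarith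
    moreover have "b < inner a (t *\<^sub>R axis k 1 + embed f0)" by (rule bspec[OF ab(2) f0C[OF t0]])
    ultimately show False by linarith
  qed
  have XC: "embed x \<in> C" if xX: "x \<in> X" for x
  proof -
    obtain f where f: "f \<in> F" "f \<le> x" using bspec[OF F(3) xX] by (elim bexE)
    define d where "d = embed x - embed f"
    have "d \<in> Orth" unfolding d_def Orth_def embed_def using f(2) by (simp add: le_fun_def)
    moreover have "embed f \<in> H" unfolding H_def using f by (intro hull_inc) auto
    moreover have "embed x = d + embed f" unfolding d_def by simp
    ultimately show ?thesis unfolding C_def by blast
  qed
  define gap where "gap = b - inner a (embed J)"
  have gap: "0 < gap" unfolding gap_def using ab by simp
  obtain N :: nat where N: "2 * (\<Sum>k\<in>UNIV. real (J k)) + 1 < real N * gap"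
    using ex_less_of_nat_mult[OF gap] by blast
  define W where "W = (\<lambda>k. nat \<lceil>real N * a$k\<rceil> + 1)"
  have W1: "\<forall>k. 1 \<le> W k" unfolding W_def by simp
  have Wlo: "real N * a$k \<le> real (W k)" for k
  proof -
    have "0 \<le> real N * a$k" using apos by simp
    then show ?thesis unfolding W_def by (rule ceilB)
  qed
  have Whi: "real (W k) \<le> real N * a$k + 2" for k
  proof -
    have "0 \<le> real N * a$k" using apos by simp
    then show ?thesis unfolding W_def by (rule ceilC)
  qed
  have rwt: "real (wt W x) = (\<Sum>k\<in>UNIV. real (W k) * real (x k))" for x
    unfolding wt_def by simp
  have wJ: "real (wt W J) < real N * b"
  proof -
    have "real (wt W J) \<le> (\<Sum>k\<in>UNIV. (real N * a$k + 2) * real (J k))"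
      unfolding rwt by (intro sum_mono mult_right_mono Whi) auto
    also have "\<dots> = real N * inner a (embed J) + 2 * (\<Sum>k\<in>UNIV. real (J k))"
      unfolding inner_embed by (simp add: algebra_simps sum.distrib sum_distrib_left)
    also have "\<dots> < real N * b" using N unfolding gap_def by (simp add: algebra_simps)
    finally show ?thesis .
  qed
  have wx: "real N * b \<le> real (wt W x)" if "x \<in> X" for x
  proof -
    have "b < inner a (embed x)" using ab(2) XC[OF that] by blast
    then have "real N * b \<le> real N * inner a (embed x)" by (intro mult_left_mono) auto
    also have "\<dots> = (\<Sum>k\<in>UNIV. real N * a$k * real (x k))"
      unfolding inner_embed by (simp add: sum_distrib_left algebra_simps)
    also have "\<dots> \<le> real (wt W x)"
      unfolding rwt by (intro sum_mono mult_right_mono Wlo) auto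
    finally show ?thesis .
  qed
  have "\<forall>x\<in>U. x \<noteq> J \<longrightarrow> wt W J < wt W x"
  proof (intro ballI impI)
    fix x assume "x \<in> U" "x \<noteq> J"
    then have "x \<in> X" unfolding X_def by simp
    then have "real (wt W J) < real (wt W x)" using wJ wx by fastforce
    then show "wt W J < wt W x" by simp
  qed
  then show ?thesis using W1 by blast
qed

lemma weight_exists:
  fixes U :: "('m::finite \<Rightarrow> nat) set"
  assumes "J \<in> Vert U"
  shows "\<exists>v. (\<forall>x\<in>U. x \<noteq> J \<longrightarrow> wt v J < wt v x) \<and>
             (\<forall>x y. wt v x = wt v y \<longrightarrow> wt v x \<le> wt v J \<longrightarrow> x = y)"
proof -
  obtain W where "\<forall>k. 1 \<le> W k" "\<forall>x\<in>U. x \<noteq> J \<longrightarrow> wt W J < wt W x"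
    using sep_weight[OF assms] by blast
  then show ?thesis by (rule generic_weight)
qed


theorem mainTheorem10:
  fixes G :: "('n::finite, 'm::finite, 'k::field_char_0) dpoly set"
    and \<phi> :: "'n \<Rightarrow> ('m, 'k) ps"
  assumes "alg_closed_field TYPE('k)"
    and "differential_ideal G"
    and "\<forall>P\<in>G. dp_eval P \<phi> = ps_zero"
  shows "\<forall>P\<in>G. trop_solution P (\<lambda>i. Supp (\<phi> i))"
proof
  fix P assume PG: "P \<in> G"
  have dp: "is_dpoly P" using assms(2) PG unfolding differential_ideal_def by blast
  have ev: "dp_eval P \<phi> = ps_zero" using assms(3) PG by blast
  show "trop_solution P (\<lambda>i. Supp (\<phi> i))"
    unfolding trop_solution_def
  proof
    fix J assume J: "J \<in> trop_eval P (\<lambda>i. Supp (\<phi> i))"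
    let ?U = "\<Union>M\<in>dsupp P. msum (trop_ps (P M)) (trop_mono_eval M (\<lambda>i. Supp (\<phi> i)))"
    have "J \<in> Vert ?U" using J unfolding trop_eval_def .
    then obtain v where v1: "\<forall>x\<in>?U. x \<noteq> J \<longrightarrow> wt v J < wt v x"
      and v2: "\<forall>x y. wt v x = wt v y \<longrightarrow> wt v x \<le> wt v J \<longrightarrow> x = y"
      using weight_exists[of J ?U] by blast
    show "\<exists>M1\<in>dsupp P. \<exists>M2\<in>dsupp P. M1 \<noteq> M2 \<and>
        J \<in> trop_term_eval P M1 (\<lambda>i. Supp (\<phi> i)) \<and> J \<in> trop_term_eval P M2 (\<lambda>i. Supp (\<phi> i))"
      by (rule main_given_weight[OF dp ev J v1 v2])
  qed
qed

end
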